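(* Let $G=(V,E)$ be an undirected graph, define $p_1(\emptyset)=0$, $p_1(V)=|E|$, $p_1(X)=i_G(X)+1$ for $\emptyset\subset X\subset V$, and $B_1=\{x\in\mathbb{R}^V:\widetilde x(V)=p_1(V),\ \widetilde x(X)\ge p_1(X)\ \forall X\subset V\}$. Let $D$ be a strongly connected orientation of $G$ with in-degree vector $m$ and let $s,t\in V$. Then $m+\chi_s-\chi_t\in B_1$ if and only if $D$ contains two arc-disjoint directed paths from $s$ to $t$.
   Context: $i_G(X)$ is the number of edges with both end-nodes in $X$; $\widetilde x(X)=\sum_{v\in X}x(v)$; $\chi_v$ is the unit vector of $v$; $m(v)=\varrho_D(v)$ is the number of arcs with head $v$. *)

theory Defs
  imports Main "HOL-Library.Indicator_Function"
begin

text \<open>An undirected (multi)graph G = (V,E): E is a finite set of edge identifiers,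
  ends e is the set of end-nodes of e (one node for a loop, two otherwise).\<close>
definition ugraph :: "'v set \<Rightarrow> 'e set \<Rightarrow> ('e \<Rightarrow> 'v set) \<Rightarrow> bool" where
  "ugraph V E ends \<longleftrightarrow> finite V \<and> finite E \<and>
     (\<forall>e\<in>E. ends e \<subseteq> V \<and> 1 \<le> card (ends e) \<and> card (ends e) \<le> 2)"

definition orientation :: "'e set \<Rightarrow> ('e \<Rightarrow> 'v set) \<Rightarrow> ('e \<Rightarrow> 'v) \<Rightarrow> ('e \<Rightarrow> 'v) \<Rightarrow> bool" where
  "orientation E ends tail head \<longleftrightarrow> (\<forall>e\<in>E. {tail e, head e} = ends e)"

text \<open>A directed path from s to t in D, given as its list of arcs; its node
  sequence s, head a1, head a2, ... has no repeated node and ends in t.\<close>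
definition dpath :: "'e set \<Rightarrow> ('e \<Rightarrow> 'v) \<Rightarrow> ('e \<Rightarrow> 'v) \<Rightarrow> 'v \<Rightarrow> 'v \<Rightarrow> 'e list \<Rightarrow> bool" where
  "dpath E tail head s t P \<longleftrightarrow> set P \<subseteq> E \<and>
     (\<forall>i < length P. tail (P ! i) = (s # map head P) ! i) \<and>
     distinct (s # map head P) \<and> last (s # map head P) = t"

definition strongly_connected :: "'v set \<Rightarrow> 'e set \<Rightarrow> ('e \<Rightarrow> 'v) \<Rightarrow> ('e \<Rightarrow> 'v) \<Rightarrow> bool" where
  "strongly_connected V E tail head \<longleftrightarrow> (\<forall>u\<in>V. \<forall>v\<in>V. \<exists>P. dpath E tail head u v P)"

definition iG :: "'e set \<Rightarrow> ('e \<Rightarrow> 'v set) \<Rightarrow> 'v set \<Rightarrow> nat" where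
  "iG E ends X = card {e\<in>E. ends e \<subseteq> X}"

definition p1 :: "'v set \<Rightarrow> 'e set \<Rightarrow> ('e \<Rightarrow> 'v set) \<Rightarrow> 'v set \<Rightarrow> real" where
  "p1 V E ends X = (if X = {} then 0 else if X = V then real (card E) else real (iG E ends X) + 1)"

definition B1 :: "'v set \<Rightarrow> 'e set \<Rightarrow> ('e \<Rightarrow> 'v set) \<Rightarrow> ('v \<Rightarrow> real) set" where
  "B1 V E ends = {x. sum x V = p1 V E ends V \<and> (\<forall>X. X \<subseteq> V \<longrightarrow> sum x X \<ge> p1 V E ends X)}"

definition indeg :: "'e set \<Rightarrow> ('e \<Rightarrow> 'v) \<Rightarrow> 'v \<Rightarrow> nat" where
  "indeg E head v = card {e\<in>E. head e = v}"

end

theory Submission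
  imports Defs
begin

fun wpath :: "('e \<Rightarrow> 'v) \<Rightarrow> ('e \<Rightarrow> 'v) \<Rightarrow> 'v \<Rightarrow> 'e list \<Rightarrow> 'v \<Rightarrow> bool" where
  "wpath ta ha u [] v = (u = v)"
| "wpath ta ha u (e # P) v = (ta e = u \<and> wpath ta ha (ha e) P v)"

lemma dpath_iff_aux:
  "((\<forall>i < length P. ta (P ! i) = (s # map ha P) ! i) \<and> last (s # map ha P) = t) \<longleftrightarrow> wpath ta ha s P t"
proof (induction P arbitrary: s)
  case Nil then show ?case by simp
next
  case (Cons e P)
  have "(\<forall>i < length (e#P). ta ((e#P) ! i) = (s # map ha (e#P)) ! i) \<longleftrightarrow>
        ta e = s \<and> (\<forall>i < length P. ta (P ! i) = (ha e # map ha P) ! i)"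
    by (auto simp: less_Suc_eq_0_disj)
  then show ?case using Cons[of "ha e"] by simp
qed

lemma dpath_iff: "dpath E ta ha s t P \<longleftrightarrow> set P \<subseteq> E \<and> wpath ta ha s P t \<and> distinct (s # map ha P)"
  unfolding dpath_def using dpath_iff_aux[of P ta s ha t] by blast

lemma wpath_append: "wpath ta ha u (P @ Q) w \<longleftrightarrow> (\<exists>m. wpath ta ha u P m \<and> wpath ta ha m Q w)"
  by (induction P arbitrary: u) auto

lemma wpath_enter: "wpath ta ha u P v \<Longrightarrow> u \<notin> X \<Longrightarrow> v \<in> X \<Longrightarrow> \<exists>e\<in>set P. ta e \<notin> X \<and> ha e \<in> X"
  by (induction P arbitrary: u) auto

inductive reach :: "'e set \<Rightarrow> ('e \<Rightarrow> 'v) \<Rightarrow> ('e \<Rightarrow> 'v) \<Rightarrow> 'v \<Rightarrow> 'v \<Rightarrow> bool" for F ta ha u where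
  rrefl: "reach F ta ha u u"
| rstep: "reach F ta ha u v \<Longrightarrow> e \<in> F \<Longrightarrow> ta e = v \<Longrightarrow> reach F ta ha u (ha e)"

lemma prefix_path:
  "wpath ta ha u P v \<Longrightarrow> distinct (u # map ha P) \<Longrightarrow> w \<in> set (u # map ha P) \<Longrightarrow>
   \<exists>P'. set P' \<subseteq> set P \<and> wpath ta ha u P' w \<and> distinct (u # map ha P')"
proof (induction P arbitrary: u)
  case Nil then show ?case by auto
next
  case (Cons e P)
  show ?case
  proof (cases "w = u")
    case True then show ?thesis by (intro exI[of _ "[]"]) auto
  next
    case False
    with Cons.prems have "w \<in> set (ha e # map ha P)" by auto
    moreover have "wpath ta ha (ha e) P v" "distinct (ha e # map ha P)" using Cons.prems by auto
    ultimately obtain P' where P': "set P' \<subseteq> set P" "wpath ta ha (ha e) P' w" "distinct (ha e # map ha P')"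
      using Cons.IH by blast
    have "u \<notin> set (ha e # map ha P')" using Cons.prems(2) P'(1) by auto
    then show ?thesis using P' Cons.prems(1) by (intro exI[of _ "e # P'"]) auto
  qed
qed

lemma reach_path: "reach F ta ha u v \<Longrightarrow> \<exists>P. set P \<subseteq> F \<and> wpath ta ha u P v \<and> distinct (u # map ha P)"
proof (induction rule: reach.induct)
  case rrefl then show ?case by (intro exI[of _ "[]"]) auto
next
  case (rstep v e)
  then obtain P where P: "set P \<subseteq> F" "wpath ta ha u P v" "distinct (u # map ha P)" by blast
  show ?case
  proof (cases "ha e \<in> set (u # map ha P)")
    case True
    then show ?thesis using prefix_path[OF P(2) P(3) True] P(1) by blast
  next
    case False
    have "wpath ta ha u (P @ [e]) (ha e)" using P(2) rstep by (auto simp: wpath_append)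
    moreover have "distinct (u # map ha (P @ [e]))" using P(3) False by auto
    ultimately show ?thesis using P(1) rstep by (intro exI[of _ "P @ [e]"]) auto
  qed
qed

definition ex :: "('e \<Rightarrow> 'v) \<Rightarrow> ('e \<Rightarrow> 'v) \<Rightarrow> 'e set \<Rightarrow> 'v \<Rightarrow> int" where
  "ex ta ha F w = (\<Sum>e\<in>F. (if ta e = w then 1 else 0) - (if ha e = w then 1 else 0))"

lemma ex_path: "wpath ta ha u P v \<Longrightarrow> distinct (u # map ha P) \<Longrightarrow>
   ex ta ha (set P) w = (if u = w then 1 else 0) - (if v = w then 1 else 0)"
proof (induction P arbitrary: u)
  case Nil then show ?case by (simp add: ex_def)
next
  case (Cons e P)
  have "e \<notin> set P" using Cons.prems(2) by auto
  then have "ex ta ha (set (e#P)) w = ((if ta e = w then 1 else 0) - (if ha e = w then 1 else 0)) + ex ta ha (set P) w"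
    by (simp add: ex_def)
  then show ?case using Cons by auto
qed

lemma ex_sum: "finite X \<Longrightarrow> finite F \<Longrightarrow>
  (\<Sum>w\<in>X. ex ta ha F w) = (\<Sum>e\<in>F. (if ta e \<in> X then 1 else 0) - (if ha e \<in> X then 1 else 0))"
  unfolding ex_def by (subst sum.swap) (simp add: sum_subtractf)

lemma reach_by_ex:
  assumes "finite F" "finite V" "\<forall>e\<in>F. ta e \<in> V \<and> ha e \<in> V" "s \<in> V" "t \<in> V"
    "\<forall>w\<in>V. w \<noteq> s \<longrightarrow> w \<noteq> t \<longrightarrow> ex ta ha F w = 0" "ex ta ha F t < 0"
  shows "reach F ta ha s t"
proof (rule ccontr)
  assume nr: "\<not> reach F ta ha s t"
  define X where "X = {w\<in>V. \<not> reach F ta ha s w}"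
  have tX: "t \<in> X" using nr assms X_def by auto
  have sX: "s \<notin> X" using X_def reach.rrefl by auto
  have fX: "finite X" using assms(2) X_def by auto
  have "(\<Sum>w\<in>X. ex ta ha F w) = ex ta ha F t + (\<Sum>w\<in>X-{t}. ex ta ha F w)"
    using tX fX by (simp add: sum.remove)
  also have "(\<Sum>w\<in>X-{t}. ex ta ha F w) = 0"
    using assms(6) sX X_def by (intro sum.neutral) auto
  finally have "(\<Sum>w\<in>X. ex ta ha F w) < 0" using assms(7) by simp
  moreover have "(\<Sum>e\<in>F. (if ta e \<in> X then 1 else 0) - (if ha e \<in> X then 1 else 0)) \<ge> (0::int)"
  proof (rule sum_nonneg)
    fix e assume e: "e \<in> F"
    show "(if ta e \<in> X then 1 else 0) - (if ha e \<in> X then 1 else 0) \<ge> (0::int)"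
    proof (cases "ta e \<in> X")
      case False
      then have "reach F ta ha s (ta e)" using X_def assms(3) e by auto
      then have "reach F ta ha s (ha e)" using reach.rstep[of F ta ha s "ta e" e] e by simp
      then have "ha e \<notin> X" unfolding X_def by simp
      then show ?thesis using False by simp
    qed simp
  qed
  ultimately show False using ex_sum[OF fX assms(1), of ta ha] by simp
qed


lemma ex_diff: "finite F \<Longrightarrow> A \<subseteq> F \<Longrightarrow> ex ta ha (F - A) w = ex ta ha F w - ex ta ha A w"
  unfolding ex_def by (simp add: sum_diff finite_subset)

lemma ex_union: "finite F \<Longrightarrow> finite B \<Longrightarrow> F \<inter> B = {} \<Longrightarrow> ex ta ha (F \<union> B) w = ex ta ha F w + ex ta ha B w"
  unfolding ex_def by (simp add: sum.union_disjoint)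

lemma sum_ind_card: "finite F \<Longrightarrow> (\<Sum>e\<in>F. if P e then 1 else 0) = (int (card {e\<in>F. P e}))"
  by (simp add: sum.inter_filter[symmetric])

lemma menger2:
  fixes ta ha :: "'e \<Rightarrow> 'v"
  assumes fV: "finite V" and fE: "finite E" and EV: "\<forall>e\<in>E. ta e \<in> V \<and> ha e \<in> V"
    and sV: "s \<in> V" and tV: "t \<in> V" and st: "s \<noteq> t"
    and cut: "\<forall>X\<subseteq>V. t \<in> X \<longrightarrow> s \<notin> X \<longrightarrow> 2 \<le> card {e\<in>E. ha e \<in> X \<and> ta e \<notin> X}"
    and P1: "set P1 \<subseteq> E" "wpath ta ha s P1 t" "distinct (s # map ha P1)"
  shows "\<exists>P Q. set P \<subseteq> E \<and> wpath ta ha s P t \<and> distinct (s # map ha P) \<and>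
     set Q \<subseteq> E \<and> wpath ta ha s Q t \<and> distinct (s # map ha Q) \<and> set P \<inter> set Q = {}"
proof -
  define F where "F = set P1"
  have FE: "F \<subseteq> E" using P1 F_def by auto
  have fF: "finite F" using F_def by auto
  have exF: "\<And>w. ex ta ha F w = (if s = w then 1 else 0) - (if t = w then 1 else 0)"
    using ex_path[OF P1(2,3)] F_def by simp
  define R :: "('e \<times> bool) set" where "R = (\<lambda>e. (e,True)) ` (E - F) \<union> (\<lambda>e. (e,False)) ` F"
  define rt :: "'e \<times> bool \<Rightarrow> 'v" where "rt = (\<lambda>(e,b). if b then ta e else ha e)"
  define rh :: "'e \<times> bool \<Rightarrow> 'v" where "rh = (\<lambda>(e,b). if b then ha e else ta e)"
  have "reach R rt rh s t"
  proof (rule ccontr)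
    assume nr: "\<not> reach R rt rh s t"
    define X where "X = {w\<in>V. \<not> reach R rt rh s w}"
    have tX: "t \<in> X" using nr tV X_def by auto
    have sX: "s \<notin> X" unfolding X_def by (auto intro: reach.rrefl)
    have fX: "finite X" using fV X_def by auto
    have XV: "X \<subseteq> V" using X_def by auto
    have leave: "\<And>e. e \<in> F \<Longrightarrow> ta e \<in> X \<Longrightarrow> ha e \<in> X"
    proof (rule ccontr)
      fix e assume e: "e \<in> F" "ta e \<in> X" "ha e \<notin> X"
      then have "reach R rt rh s (ha e)" using X_def EV FE by auto
      moreover have "(e,False) \<in> R" using e R_def by auto
      ultimately have "reach R rt rh s (rh (e,False))" using reach.rstep[of R rt rh s "ha e" "(e,False)"]
        by (simp add: rt_def)
      then show False using e X_def by (simp add: rh_def)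
    qed
    have enter: "{e\<in>E. ha e \<in> X \<and> ta e \<notin> X} = {e\<in>F. ha e \<in> X \<and> ta e \<notin> X}"
    proof -
      have "e \<in> F" if e: "e \<in> E" "ha e \<in> X" "ta e \<notin> X" for e
      proof (rule ccontr)
        assume "e \<notin> F"
        then have "(e,True) \<in> R" using e R_def by auto
        moreover have "reach R rt rh s (ta e)" using e X_def EV by auto
        ultimately have "reach R rt rh s (rh (e,True))" using reach.rstep[of R rt rh s "ta e" "(e,True)"]
          by (simp add: rt_def)
        then show False using e X_def by (simp add: rh_def)
      qed
      then show ?thesis using FE by auto
    qed
    have "(\<Sum>w\<in>X. ex ta ha F w) = (\<Sum>w\<in>X. (if s = w then 1 else 0) - (if t = w then 1 else 0))"
      using exF by simp
    also have "\<dots> = -1" using sX tX fX by (simp add: sum_subtractf)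
    finally have s1: "(\<Sum>w\<in>X. ex ta ha F w) = -1" .
    have "(\<Sum>e\<in>F. (if ta e \<in> X then 1 else 0) - (if ha e \<in> X then 1 else 0))
       = (\<Sum>e\<in>F. - (if ha e \<in> X \<and> ta e \<notin> X then 1 else 0 :: int))"
      using leave by (intro sum.cong) auto
    also have "\<dots> = - int (card {e\<in>F. ha e \<in> X \<and> ta e \<notin> X})"
      using fF by (simp add: sum_negf sum_ind_card)
    finally have "int (card {e\<in>F. ha e \<in> X \<and> ta e \<notin> X}) = 1"
      using s1 ex_sum[OF fX fF, of ta ha] by simp
    then have "card {e\<in>E. ha e \<in> X \<and> ta e \<notin> X} = 1" using enter by simp
    then show False using cut[rule_format, OF XV tX sX] by simp
  qed
  from reach_path[OF this] obtain Q where Q: "set Q \<subseteq> R" "wpath rt rh s Q t" "distinct (s # map rh Q)"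
    by blast
  have exQ: "\<And>w. ex rt rh (set Q) w = (if s = w then 1 else 0) - (if t = w then 1 else 0)"
    using ex_path[OF Q(2,3)] by simp
  define A where "A = {e. (e,False) \<in> set Q}"
  define B where "B = {e. (e,True) \<in> set Q}"
  have AF: "A \<subseteq> F" using A_def Q(1) R_def by auto
  have BE: "B \<subseteq> E - F" using B_def Q(1) R_def by auto
  have fA: "finite A" using AF fF finite_subset by blast
  have fB: "finite B" using BE fE finite_subset by blast
  have setQ: "set Q = (\<lambda>e. (e,True)) ` B \<union> (\<lambda>e. (e,False)) ` A"
  proof safe
    fix e b assume "(e,b) \<in> set Q"
    then show "(e,b) \<in> (\<lambda>e. (e,True)) ` B" if "(e,b) \<notin> (\<lambda>e. (e,False)) ` A"
      using that by (cases b) (auto simp: A_def B_def)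
  qed (auto simp: A_def B_def)
  have exQ2: "ex rt rh (set Q) w = ex ta ha B w - ex ta ha A w" for w
  proof -
    have "ex rt rh (set Q) w = ex rt rh ((\<lambda>e. (e,True)) ` B) w + ex rt rh ((\<lambda>e. (e,False)) ` A) w"
      unfolding setQ ex_def using fA fB by (intro sum.union_disjoint) auto
    also have "ex rt rh ((\<lambda>e. (e,True)) ` B) w = ex ta ha B w"
      unfolding ex_def by (subst sum.reindex) (auto simp: inj_on_def rt_def rh_def)
    also have "ex rt rh ((\<lambda>e. (e,False)) ` A) w = - ex ta ha A w"
      unfolding ex_def by (subst sum.reindex) (auto simp: inj_on_def rt_def rh_def sum_subtractf)
    finally show ?thesis by simp
  qed
  define F' where "F' = (F - A) \<union> B"
  have F'E: "F' \<subseteq> E" using F'_def FE BE by auto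
  have fF': "finite F'" using F'E fE finite_subset by blast
  have exF': "ex ta ha F' w = 2 * ((if s = w then 1 else 0) - (if t = w then 1 else 0))" for w
  proof -
    have "ex ta ha F' w = ex ta ha (F - A) w + ex ta ha B w"
      unfolding F'_def using fF fB BE by (intro ex_union) auto
    also have "\<dots> = ex ta ha F w - ex ta ha A w + ex ta ha B w" using ex_diff[OF fF AF] by simp
    finally show ?thesis using exF[of w] exQ[of w] exQ2[of w] by simp
  qed
  have "reach F' ta ha s t"
    using fF' fV F'E EV sV tV st exF' by (intro reach_by_ex[where V=V]) auto
  from reach_path[OF this] obtain P where P: "set P \<subseteq> F'" "wpath ta ha s P t" "distinct (s # map ha P)"
    by blast
  define F'' where "F'' = F' - set P"
  have exF'': "ex ta ha F'' w = (if s = w then 1 else 0) - (if t = w then 1 else 0)" for w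
    unfolding F''_def using ex_diff[OF fF' P(1), of ta ha w] exF'[of w] ex_path[OF P(2,3), of w] by simp
  have "reach F'' ta ha s t"
    using fF' fV F'E EV sV tV st exF'' unfolding F''_def by (intro reach_by_ex[where V=V]) auto
  from reach_path[OF this] obtain P2 where P2: "set P2 \<subseteq> F''" "wpath ta ha s P2 t" "distinct (s # map ha P2)"
    by blast
  show ?thesis
    using P P2 F'E unfolding F''_def by (intro exI[of _ P] exI[of _ P2]) auto
qed


theorem claim6p3:
  fixes V :: "'v set" and E :: "'e set" and ends :: "'e \<Rightarrow> 'v set"
    and tail head :: "'e \<Rightarrow> 'v" and s t :: 'v
  assumes "ugraph V E ends"
    and "orientation E ends tail head"
    and "strongly_connected V E tail head"
    and "s \<in> V" and "t \<in> V"
  shows "(\<lambda>v. real (indeg E head v) + indicator {s} v - indicator {t} v) \<in> B1 V E ends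
     \<longleftrightarrow> (\<exists>P Q. dpath E tail head s t P \<and> dpath E tail head s t Q \<and> set P \<inter> set Q = {})"
proof -
  have fV: "finite V" and fE: "finite E" and eV: "\<forall>e\<in>E. ends e \<subseteq> V"
    using assms(1) unfolding ugraph_def by auto
  have ori: "\<And>e. e \<in> E \<Longrightarrow> ends e = {tail e, head e}" using assms(2) unfolding orientation_def by auto
  have EV: "\<forall>e\<in>E. tail e \<in> V \<and> head e \<in> V" using eV ori by auto
  define x where "x = (\<lambda>v. real (indeg E head v) + indicator {s} v - indicator {t} v)"
  define ent where "ent X = card {e\<in>E. head e \<in> X \<and> tail e \<notin> X}" for X
  have sumx: "sum x X = real (iG E ends X) + real (ent X) + (if s \<in> X then 1 else 0) - (if t \<in> X then 1 else 0)"
    if XV: "X \<subseteq> V" for X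
  proof -
    have fX: "finite X" using XV fV finite_subset by blast
    have 1: "sum x X = (\<Sum>v\<in>X. real (indeg E head v)) + (\<Sum>v\<in>X. indicator {s} v) - (\<Sum>v\<in>X. indicator {t} v)"
      unfolding x_def by (simp add: sum.distrib sum_subtractf)
    have 2: "(\<Sum>v\<in>X. indicator {a} v :: real) = (if a \<in> X then 1 else 0)" for a
      using fX by (simp add: indicator_def)
    have U: "{e\<in>E. head e \<in> X} = (\<Union>v\<in>X. {e\<in>E. head e = v})" by auto
    have "card (\<Union>v\<in>X. {e\<in>E. head e = v}) = (\<Sum>v\<in>X. card {e\<in>E. head e = v})"
      using fX fE by (intro card_UN_disjoint) auto
    then have 3: "card {e\<in>E. head e \<in> X} = (\<Sum>v\<in>X. indeg E head v)"
      unfolding indeg_def U .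
    have "{e\<in>E. head e \<in> X} = {e\<in>E. ends e \<subseteq> X} \<union> {e\<in>E. head e \<in> X \<and> tail e \<notin> X}"
      using ori by auto
    moreover have "{e\<in>E. ends e \<subseteq> X} \<inter> {e\<in>E. head e \<in> X \<and> tail e \<notin> X} = {}" using ori by auto
    moreover have "card ({e\<in>E. ends e \<subseteq> X} \<union> {e\<in>E. head e \<in> X \<and> tail e \<notin> X}) =
       card {e\<in>E. ends e \<subseteq> X} + card {e\<in>E. head e \<in> X \<and> tail e \<notin> X}"
      using fE ori by (intro card_Un_disjoint) auto
    ultimately have 4: "card {e\<in>E. head e \<in> X} = iG E ends X + ent X"
      unfolding iG_def ent_def by simp
    have "(\<Sum>v\<in>X. real (indeg E head v)) = real (\<Sum>v\<in>X. indeg E head v)"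
      by simp
    also have "\<dots> = real (iG E ends X + ent X)" using 3 4 by simp
    finally have "(\<Sum>v\<in>X. real (indeg E head v)) = real (iG E ends X + ent X)" .
    then show ?thesis using 1 2[of s] 2[of t] by simp
  qed
  have entV: "ent V = 0"
  proof -
    have Z: "{e\<in>E. head e \<in> V \<and> tail e \<notin> V} = {}" using EV by auto
    show ?thesis unfolding ent_def Z by simp
  qed
  have iGV: "iG E ends V = card E"
  proof -
    have Z: "{e\<in>E. ends e \<subseteq> V} = E" using eV by auto
    show ?thesis unfolding iG_def Z ..
  qed
  have sc: "ent X \<ge> 1" if XV: "X \<subseteq> V" and ne: "X \<noteq> {}" and nV: "X \<noteq> V" for X
  proof -
    obtain v where v: "v \<in> X" using ne by auto
    obtain u where u: "u \<in> V" "u \<notin> X" using XV nV by auto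
    obtain P where "dpath E tail head u v P" using assms(3) u v XV unfolding strongly_connected_def by blast
    then have P: "set P \<subseteq> E" "wpath tail head u P v" by (auto simp: dpath_iff)
    obtain e where "e \<in> set P" "tail e \<notin> X" "head e \<in> X" using wpath_enter[OF P(2) u(2) v] by blast
    then have "e \<in> {e\<in>E. head e \<in> X \<and> tail e \<notin> X}" using P(1) by auto
    then have "{e\<in>E. head e \<in> X \<and> tail e \<notin> X} \<noteq> {}" by blast
    moreover have "finite {e\<in>E. head e \<in> X \<and> tail e \<notin> X}" using fE by simp
    ultimately have "0 < card {e\<in>E. head e \<in> X \<and> tail e \<notin> X}" using card_gt_0_iff by blast
    then show ?thesis unfolding ent_def by simp
  qed
  have p1V: "p1 V E ends V = real (card E)" using assms(4) unfolding p1_def by auto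
  have B1iff: "x \<in> B1 V E ends \<longleftrightarrow> (\<forall>X\<subseteq>V. t \<in> X \<longrightarrow> s \<notin> X \<longrightarrow> 2 \<le> ent X)"
  proof
    assume B: "x \<in> B1 V E ends"
    show "\<forall>X\<subseteq>V. t \<in> X \<longrightarrow> s \<notin> X \<longrightarrow> 2 \<le> ent X"
    proof (intro allI impI)
      fix X assume X: "X \<subseteq> V" "t \<in> X" "s \<notin> X"
      have "X \<noteq> {}" "X \<noteq> V" using X assms(4) by auto
      then have "p1 V E ends X = real (iG E ends X) + 1" unfolding p1_def by auto
      moreover have "sum x X \<ge> p1 V E ends X" using B X unfolding B1_def by auto
      ultimately show "2 \<le> ent X" using sumx[OF X(1)] X by simp
    qed
  next
    assume C: "\<forall>X\<subseteq>V. t \<in> X \<longrightarrow> s \<notin> X \<longrightarrow> 2 \<le> ent X"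
    have "sum x V = p1 V E ends V" using sumx[of V] entV iGV p1V assms(4,5) by simp
    moreover have "sum x X \<ge> p1 V E ends X" if X: "X \<subseteq> V" for X
    proof (cases "X = {} \<or> X = V")
      case True
      then show ?thesis using sumx[of V] entV iGV p1V assms(4,5) by (auto simp: p1_def)
    next
      case False
      then have p: "p1 V E ends X = real (iG E ends X) + 1" unfolding p1_def by auto
      have e1: "ent X \<ge> 1" using sc X False by auto
      have "t \<in> X \<Longrightarrow> s \<notin> X \<Longrightarrow> ent X \<ge> 2" using C X by auto
      then show ?thesis using p e1 sumx[OF X] by (cases "s \<in> X"; cases "t \<in> X") auto
    qed
    ultimately show "x \<in> B1 V E ends" unfolding B1_def by auto
  qed
  have cutiff: "(\<forall>X\<subseteq>V. t \<in> X \<longrightarrow> s \<notin> X \<longrightarrow> 2 \<le> ent X) \<longleftrightarrow>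
     (\<exists>P Q. dpath E tail head s t P \<and> dpath E tail head s t Q \<and> set P \<inter> set Q = {})"
  proof (cases "s = t")
    case True
    have "dpath E tail head s t []" using True by (simp add: dpath_def)
    then show ?thesis using True by (intro iffI; (intro exI[of _ "[]"])?) auto
  next
    case st: False
    show ?thesis
    proof
      assume C: "\<forall>X\<subseteq>V. t \<in> X \<longrightarrow> s \<notin> X \<longrightarrow> 2 \<le> ent X"
      obtain P1 where "dpath E tail head s t P1" using assms(3-5) unfolding strongly_connected_def by blast
      then have P1: "set P1 \<subseteq> E" "wpath tail head s P1 t" "distinct (s # map head P1)" by (auto simp: dpath_iff)
      have "\<exists>P Q. set P \<subseteq> E \<and> wpath tail head s P t \<and> distinct (s # map head P) \<and>
     set Q \<subseteq> E \<and> wpath tail head s Q t \<and> distinct (s # map head Q) \<and> set P \<inter> set Q = {}"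
        using menger2[OF fV fE EV assms(4,5) st _ P1] C unfolding ent_def by blast
      then show "\<exists>P Q. dpath E tail head s t P \<and> dpath E tail head s t Q \<and> set P \<inter> set Q = {}"
        by (auto simp: dpath_iff)
    next
      assume "\<exists>P Q. dpath E tail head s t P \<and> dpath E tail head s t Q \<and> set P \<inter> set Q = {}"
      then obtain P Q where P: "set P \<subseteq> E" "wpath tail head s P t" and Q: "set Q \<subseteq> E" "wpath tail head s Q t"
        and d: "set P \<inter> set Q = {}" by (auto simp: dpath_iff)
      show "\<forall>X\<subseteq>V. t \<in> X \<longrightarrow> s \<notin> X \<longrightarrow> 2 \<le> ent X"
      proof (intro allI impI)
        fix X assume X: "X \<subseteq> V" "t \<in> X" "s \<notin> X"
        obtain e1 where e1: "e1 \<in> set P" "tail e1 \<notin> X" "head e1 \<in> X" using wpath_enter[OF P(2) X(3,2)] by blast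
        obtain e2 where e2: "e2 \<in> set Q" "tail e2 \<notin> X" "head e2 \<in> X" using wpath_enter[OF Q(2) X(3,2)] by blast
        have ne: "e1 \<noteq> e2" using e1 e2 d by auto
        have "{e1, e2} \<subseteq> {e\<in>E. head e \<in> X \<and> tail e \<notin> X}" using e1 e2 P Q by auto
        then have "card {e1, e2} \<le> ent X" unfolding ent_def using fE by (intro card_mono) auto
        then show "2 \<le> ent X" using ne by simp
      qed
    qed
  qed
  show ?thesis using B1iff cutiff unfolding x_def by simp
qed

end
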